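(* Let $(X,d,\mu)$ be a metric measure space, $Y$ a complete metric space, $p\ge1$ and let $u\in N^{1,p}_{loc}(X,Y)$ be continuous. If $\gamma:[a,b]\to X$ is $(u,p)$-regular and $a\le t\le s\le b$, then $\gamma|_{[t,s]}$ is $(u,p)$-regular and $\ell_{u,p}(\gamma)=\ell(u\circ\gamma)$.
   Context: A metric measure space is a proper metric space with a Borel regular outer measure positive and finite on balls. $\operatorname{Mod}_p\Gamma=\inf\int\rho^pd\mu$ over Borel $\rho\ge0$ with $\int_\gamma\rho\ge1$ on $\Gamma$. For Lipschitz curves $\alpha,\beta$ on the same interval let $d_\infty(\alpha,\beta)=\sup_td(\alpha(t),\beta(t))$ and $B(\gamma,\delta)$ the open $d_\infty$-ball of Lipschitz curves. For a family $\Gamma$ of Lipschitz curves, $ess\ell_{u,p}(\Gamma):=\sup_{\operatorname{Mod}_p\Gamma_0=0}\inf\{\ell(u\circ\gamma):\gamma\in\Gamma\setminus\Gamma_0\}$ ($\inf\emptyset=\infty$). A Lipschitz curve $\gamma$ is $(u,p)$-regular if $u\circ\gamma$ is absolutely continuous and $ess\ell_{u,p}B(\gamma,\delta)\le\ell(u\circ\gamma)$ for every $\delta>0$. With $\Gamma(E,F)$ the Lipschitz curves $[0,1]\to X$ from $E$ to $F$, let $d'_{u,p}(x,y):=\lim_{\delta\to0}ess\ell_{u,p}\Gamma(\bar B(x,\delta),\bar B(y,\delta))$ and $d_{u,p}(x,y):=\inf\{\sum_{i=1}^nd'_{u,p}(x_{i-1},x_i):x_0=x,x_n=y\}$, the largest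 pseudometric $\le d'_{u,p}$. $\ell_{u,p}(\gamma)$ denotes the length of $\gamma$ with respect to $d_{u,p}$. *)

theory Defs
  imports "HOL-Analysis.Analysis" "HOL-Library.Extended_Nonnegative_Real"
begin

text \<open>A curve is represented as a triple (a, b, g): the map g restricted to [a,b].
  Values of g outside [a,b] are irrelevant.\<close>
type_synonym 'a curve = "real \<times> real \<times> (real \<Rightarrow> 'a)"

definition lip_curve :: "('a::metric_space) curve \<Rightarrow> bool" where
  "lip_curve c = (case c of (a, b, g) \<Rightarrow> a \<le> b \<and> (\<exists>L. L-lipschitz_on {a..b} g))"

definition enn_powr :: "ennreal \<Rightarrow> real \<Rightarrow> ennreal" where
  "enn_powr x p = (if x = top then top else ennreal (enn2real x powr p))"

definition var_length :: "('b \<Rightarrow> 'b \<Rightarrow> ennreal) \<Rightarrow> real \<Rightarrow> real \<Rightarrow> (real \<Rightarrow> 'b) \<Rightarrow> ennreal" where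
  "var_length d a b g =
     (SUP ts \<in> {ts. sorted ts \<and> set ts \<subseteq> {a..b}}.
        (\<Sum>i < length ts - 1. d (g (ts ! i)) (g (ts ! Suc i))))"

definition curve_length :: "real \<Rightarrow> real \<Rightarrow> (real \<Rightarrow> 'b::metric_space) \<Rightarrow> ennreal" where
  "curve_length a b g = var_length (\<lambda>x y. ennreal (dist x y)) a b g"

definition abs_cont_on :: "real \<Rightarrow> real \<Rightarrow> (real \<Rightarrow> 'b::metric_space) \<Rightarrow> bool" where
  "abs_cont_on a b f =
     (\<forall>\<epsilon>>0. \<exists>\<delta>>0. \<forall>(n::nat) (l::nat \<Rightarrow> real) (r::nat \<Rightarrow> real).
        (\<forall>i<n. a \<le> l i \<and> l i \<le> r i \<and> r i \<le> b) \<and>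
        (\<forall>i<n. \<forall>j<n. i \<noteq> j \<longrightarrow> {l i<..<r i} \<inter> {l j<..<r j} = {}) \<and>
        (\<Sum>i<n. r i - l i) < \<delta> \<longrightarrow>
        (\<Sum>i<n. dist (f (l i)) (f (r i))) < \<epsilon>)"

definition metric_speed :: "(real \<Rightarrow> 'a::metric_space) \<Rightarrow> real \<Rightarrow> ennreal" where
  "metric_speed g t = e2ennreal (Limsup (at (0::real)) (\<lambda>h. ereal (dist (g (t + h)) (g t) / \<bar>h\<bar>)))"

definition line_integral :: "('a::metric_space \<Rightarrow> ennreal) \<Rightarrow> 'a curve \<Rightarrow> ennreal" where
  "line_integral \<rho> c = (case c of (a, b, g) \<Rightarrow>
     (\<integral>\<^sup>+ t. \<rho> (g t) * metric_speed g t * indicator {a..b} t \<partial>lborel))"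

text \<open>Proper metric space with a Borel measure positive and finite on balls.
  (The Borel regular outer measure is represented by its restriction to Borel sets.)\<close>
definition mms :: "('a::metric_space) measure \<Rightarrow> bool" where
  "mms \<mu> = ((\<forall>(x::'a) r. compact (cball x r)) \<and> sets \<mu> = sets borel \<and>
     (\<forall>x r. r > 0 \<longrightarrow> 0 < emeasure \<mu> (ball x r) \<and> emeasure \<mu> (ball x r) < \<infinity>))"

definition p_modulus :: "('a::metric_space) measure \<Rightarrow> real \<Rightarrow> 'a curve set \<Rightarrow> ennreal" where
  "p_modulus \<mu> p \<Gamma> =
     (INF \<rho> \<in> {\<rho>. \<rho> \<in> borel_measurable borel \<and> (\<forall>c\<in>\<Gamma>. 1 \<le> line_integral \<rho> c)}.
        \<integral>\<^sup>+ x. enn_powr (\<rho> x) p \<partial>\<mu>)"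

definition weak_upper_gradient ::
  "('a::metric_space) measure \<Rightarrow> real \<Rightarrow> 'a set \<Rightarrow> ('a \<Rightarrow> 'b::metric_space) \<Rightarrow> ('a \<Rightarrow> ennreal) \<Rightarrow> bool" where
  "weak_upper_gradient \<mu> p U u g =
     (g \<in> borel_measurable borel \<and>
      (\<exists>\<Gamma>0. p_modulus \<mu> p \<Gamma>0 = 0 \<and>
        (\<forall>c. lip_curve c \<and> c \<notin> \<Gamma>0 \<and> (case c of (a, b, \<gamma>) \<Rightarrow> \<gamma> ` {a..b} \<subseteq> U) \<longrightarrow>
           (case c of (a, b, \<gamma>) \<Rightarrow> ennreal (dist (u (\<gamma> a)) (u (\<gamma> b))) \<le> line_integral g c))))"

text \<open>u in N^{1,p}(B,Y) for an open ball B (u measurable, essentially separably valued,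
  d(y0,u) in L^p(B), with a p-weak upper gradient in L^p(B)); N^{1,p}_loc: every point
  has such a ball.\<close>
definition newtonian_on ::
  "('a::metric_space) measure \<Rightarrow> real \<Rightarrow> 'a set \<Rightarrow> ('a \<Rightarrow> 'b::metric_space) \<Rightarrow> bool" where
  "newtonian_on \<mu> p U u =
     ((\<exists>N \<in> null_sets \<mu>. \<exists>D. countable D \<and> u ` (U - N) \<subseteq> closure D) \<and>
      (\<exists>y0. (\<integral>\<^sup>+ x. enn_powr (ennreal (dist y0 (u x))) p * indicator U x \<partial>\<mu>) < \<infinity>) \<and>
      (\<exists>g. weak_upper_gradient \<mu> p U u g \<and> (\<integral>\<^sup>+ x. enn_powr (g x) p * indicator U x \<partial>\<mu>) < \<infinity>))"

definition newtonian_loc ::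
  "('a::metric_space) measure \<Rightarrow> real \<Rightarrow> ('a \<Rightarrow> 'b::metric_space) \<Rightarrow> bool" where
  "newtonian_loc \<mu> p u =
     (u \<in> borel_measurable borel \<and> (\<forall>x. \<exists>r>0. newtonian_on \<mu> p (ball x r) u))"

definition ess_len ::
  "('a::metric_space) measure \<Rightarrow> real \<Rightarrow> ('a \<Rightarrow> 'b::metric_space) \<Rightarrow> 'a curve set \<Rightarrow> ennreal" where
  "ess_len \<mu> p u \<Gamma> =
     (SUP \<Gamma>0 \<in> {\<Gamma>0. p_modulus \<mu> p \<Gamma>0 = 0}.
        INF c \<in> \<Gamma> - \<Gamma>0. (case c of (a, b, \<gamma>) \<Rightarrow> curve_length a b (u \<circ> \<gamma>)))"

definition curve_ball :: "('a::metric_space) curve \<Rightarrow> real \<Rightarrow> 'a curve set" where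
  "curve_ball c \<delta> = (case c of (a, b, g) \<Rightarrow>
     {(a, b, h) | h. lip_curve (a, b, h) \<and> (SUP t \<in> {a..b}. ereal (dist (h t) (g t))) < ereal \<delta>})"

definition regular_curve ::
  "('a::metric_space) measure \<Rightarrow> real \<Rightarrow> ('a \<Rightarrow> 'b::metric_space) \<Rightarrow> 'a curve \<Rightarrow> bool" where
  "regular_curve \<mu> p u c = (lip_curve c \<and> (case c of (a, b, g) \<Rightarrow>
     abs_cont_on a b (u \<circ> g) \<and>
     (\<forall>\<delta>>0. ess_len \<mu> p u (curve_ball c \<delta>) \<le> curve_length a b (u \<circ> g))))"

definition curves_between :: "'a::metric_space set \<Rightarrow> 'a set \<Rightarrow> 'a curve set" where
  "curves_between E F = {(0, 1, g) | g. lip_curve (0, 1, g) \<and> g 0 \<in> E \<and> g 1 \<in> F}"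

definition d_prime ::
  "('a::metric_space) measure \<Rightarrow> real \<Rightarrow> ('a \<Rightarrow> 'b::metric_space) \<Rightarrow> 'a \<Rightarrow> 'a \<Rightarrow> ennreal" where
  "d_prime \<mu> p u x y =
     Lim (at_right (0::real)) (\<lambda>\<delta>. ess_len \<mu> p u (curves_between (cball x \<delta>) (cball y \<delta>)))"

definition d_up ::
  "('a::metric_space) measure \<Rightarrow> real \<Rightarrow> ('a \<Rightarrow> 'b::metric_space) \<Rightarrow> 'a \<Rightarrow> 'a \<Rightarrow> ennreal" where
  "d_up \<mu> p u x y =
     (INF zs \<in> (UNIV :: 'a list set).
        (let xs = x # zs @ [y] in
          \<Sum>i < length xs - 1. d_prime \<mu> p u (xs ! i) (xs ! Suc i)))"

definition len_up ::
  "('a::metric_space) measure \<Rightarrow> real \<Rightarrow> ('a \<Rightarrow> 'b::metric_space) \<Rightarrow> 'a curve \<Rightarrow> ennreal" where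
  "len_up \<mu> p u c = (case c of (a, b, g) \<Rightarrow> var_length (d_up \<mu> p u) a b g)"

end

theory Submission
  imports Defs
begin

fun psum :: "('b \<Rightarrow> 'b \<Rightarrow> ennreal) \<Rightarrow> 'b list \<Rightarrow> ennreal" where
  "psum d (x # y # r) = d x y + psum d (y # r)"
| "psum d _ = 0"

lemma sum_psum: "(\<Sum>i < length xs - 1. d (xs ! i) (xs ! Suc i)) = psum d xs"
proof (induction d xs rule: psum.induct)
  case (1 d x y r)
  have "(\<Sum>i < length (x # y # r) - 1. d ((x # y # r) ! i) ((x # y # r) ! Suc i))
      = (\<Sum>i < Suc (length (y # r) - 1). d ((x # y # r) ! i) ((x # y # r) ! Suc i))" by simp
  also have "\<dots> = d x y + (\<Sum>i < length (y # r) - 1. d ((y # r) ! i) ((y # r) ! Suc i))"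
    by (subst sum.lessThan_Suc_shift) simp
  finally show ?case using 1 by simp
qed auto

lemma sum_psum_map: "(\<Sum>i < length ts - 1. d (f (ts ! i)) (f (ts ! Suc i))) = psum d (map f ts)"
proof -
  have "(\<Sum>i < length ts - 1. d (f (ts ! i)) (f (ts ! Suc i))) =
        (\<Sum>i < length (map f ts) - 1. d (map f ts ! i) (map f ts ! Suc i))"
    by (intro sum.cong) auto
  then show ?thesis using sum_psum[of d "map f ts"] by simp
qed

lemma var_length_psum: "var_length d a b f = (SUP ts \<in> {ts. sorted ts \<and> set ts \<subseteq> {a..b}}. psum d (map f ts))"
  unfolding var_length_def sum_psum_map ..

lemma psum_mono_d: "(\<And>x y. d x y \<le> d' x y) \<Longrightarrow> psum d xs \<le> psum d' xs"
  by (induction d xs rule: psum.induct) (auto intro: add_mono)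

lemma psum_map: "psum d (map f xs) = psum (\<lambda>x y. d (f x) (f y)) xs"
  by (induction "\<lambda>x y. d (f x) (f y)" xs rule: psum.induct) auto

lemma psum_Cons_ge: "psum d ys \<le> psum d (x # ys)"
  by (cases ys) auto

lemma psum_append_ge: "psum d xs + psum d ys \<le> psum d (xs @ ys)"
proof (induction d xs rule: psum.induct)
  case (1 d x y r)
  then show ?case by (simp add: add.assoc add_left_mono)
next
  case ("2_1" d)
  then show ?case by simp
next
  case ("2_2" d x)
  then show ?case using psum_Cons_ge[of d ys x] by simp
qed

lemma psum_le_var_length:
  "sorted ts \<Longrightarrow> set ts \<subseteq> {a..b} \<Longrightarrow> psum d (map f ts) \<le> var_length d a b f"
  unfolding var_length_psum by (rule SUP_upper) auto

lemma var_length_mono_d: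
  "(\<And>x y. d x y \<le> d' x y) \<Longrightarrow> var_length d a b f \<le> var_length d' a b f"
  unfolding var_length_psum by (intro SUP_mono) (auto intro: psum_mono_d)

lemma var_length_mono_int:
  "a \<le> c \<Longrightarrow> e \<le> b \<Longrightarrow> var_length d c e f \<le> var_length d a b f"
  unfolding var_length_psum by (intro SUP_subset_mono) auto

lemma var_length_superadd:
  assumes "m \<le> b" "a \<le> m"
  shows "var_length d a m f + var_length d m b f \<le> var_length d a b f"
proof -
  let ?I = "\<lambda>a b. {ts. sorted ts \<and> set ts \<subseteq> {a..(b::real)}}"
  have ne: "?I a m \<noteq> {}" "?I m b \<noteq> {}" by (auto intro!: exI[of _ "[]"])
  have key: "psum d (map f P) + psum d (map f Q) \<le> var_length d a b f"
    if "P \<in> ?I a m" "Q \<in> ?I m b" for P Q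
  proof -
    have "psum d (map f P) + psum d (map f Q) \<le> psum d (map f (P @ Q))"
      using psum_append_ge[of d "map f P" "map f Q"] by simp
    also have "\<dots> \<le> var_length d a b f"
      using that assms by (intro psum_le_var_length) (auto simp: sorted_append subset_iff intro: order_trans)
    finally show ?thesis .
  qed
  have "(SUP P\<in>?I a m. psum d (map f P)) + (SUP Q\<in>?I m b. psum d (map f Q))
      = (SUP P\<in>?I a m. psum d (map f P) + (SUP Q\<in>?I m b. psum d (map f Q)))"
    by (rule ennreal_SUP_add_left[OF ne(1), symmetric])
  also have "\<dots> \<le> var_length d a b f"
  proof (rule SUP_least)
    fix P assume P: "P \<in> ?I a m"
    have "psum d (map f P) + (SUP Q\<in>?I m b. psum d (map f Q))
        = (SUP Q\<in>?I m b. psum d (map f P) + psum d (map f Q))"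
      by (rule ennreal_SUP_add_right[OF ne(2)])
    also have "\<dots> \<le> var_length d a b f"
      by (rule SUP_least) (rule key[OF P])
    finally show "psum d (map f P) + (SUP Q\<in>?I m b. psum d (map f Q)) \<le> var_length d a b f" .
  qed
  finally show ?thesis unfolding var_length_psum .
qed

lemma psum_split:
  assumes tri: "\<And>x y z. d x z \<le> d x y + d y z"
  shows "sorted ts \<Longrightarrow> psum d ts \<le> psum d (filter (\<lambda>x. x \<le> m) ts @ [m]) + psum d (m # filter (\<lambda>x. m < x) ts)"
proof (induction ts)
  case Nil
  then show ?case by simp
next
  case (Cons x rest)
  have srt: "sorted rest" and ge: "\<forall>y\<in>set rest. x \<le> y" using Cons.prems by auto
  note IH = Cons.IH[OF srt]
  show ?case
  proof (cases "x \<le> m")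
    case False
    then have "filter (\<lambda>x. x \<le> m) (x # rest) = []" "filter (\<lambda>y. m < y) (x # rest) = x # rest"
      using ge by (auto simp: filter_empty_conv filter_id_conv)
    then show ?thesis by simp
  next
    case True
    show ?thesis
    proof (cases rest)
      case Nil
      then show ?thesis by simp
    next
      case (Cons z zs)
      show ?thesis
      proof (cases "z \<le> m")
        case True
        have e1: "filter (\<lambda>y. y \<le> m) (x # rest) @ [m] = x # (filter (\<lambda>y. y \<le> m) rest @ [m])"
          using \<open>x \<le> m\<close> by simp
        have e2: "filter (\<lambda>y. m < y) (x # rest) = filter (\<lambda>y. m < y) rest"
          using \<open>x \<le> m\<close> by simp
        have e3: "filter (\<lambda>y. y \<le> m) rest @ [m] = z # (filter (\<lambda>y. y \<le> m) zs @ [m])"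
          using Cons True by simp
        have "psum d (x # rest) = d x z + psum d rest" using Cons by simp
        also have "\<dots> \<le> d x z + (psum d (filter (\<lambda>y. y \<le> m) rest @ [m]) + psum d (m # filter (\<lambda>y. m < y) rest))"
          using IH by (rule add_left_mono)
        also have "\<dots> = psum d (x # (filter (\<lambda>y. y \<le> m) rest @ [m])) + psum d (m # filter (\<lambda>y. m < y) rest)"
          unfolding e3 by (simp add: add.assoc)
        finally show ?thesis unfolding e1 e2 .
      next
        case False
        then have "filter (\<lambda>x. x \<le> m) rest = []" "filter (\<lambda>y. m < y) rest = rest"
          using Cons srt by (auto simp: filter_empty_conv filter_id_conv)
        then show ?thesis using \<open>x \<le> m\<close> Cons tri[of x z m] tri[of x m z]
          by (simp add: add.assoc add_right_mono)
      qed
    qed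
  qed
qed

lemma var_length_subadd:
  assumes tri: "\<And>x y z. d x z \<le> d x y + d y z" and "a \<le> m" "m \<le> b"
  shows "var_length d a b f \<le> var_length d a m f + var_length d m b f"
  unfolding var_length_psum[of d a b f]
proof (rule SUP_least)
  fix ts assume ts: "ts \<in> {ts. sorted ts \<and> set ts \<subseteq> {a..b}}"
  let ?D = "\<lambda>x y. d (f x) (f y)"
  have "psum d (map f ts) = psum ?D ts" by (rule psum_map)
  also have "\<dots> \<le> psum ?D (filter (\<lambda>x. x \<le> m) ts @ [m]) + psum ?D (m # filter (\<lambda>x. m < x) ts)"
    using ts by (intro psum_split tri) auto
  also have "\<dots> = psum d (map f (filter (\<lambda>x. x \<le> m) ts @ [m])) + psum d (map f (m # filter (\<lambda>x. m < x) ts))"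
    by (simp only: psum_map)
  also have "\<dots> \<le> var_length d a m f + var_length d m b f"
    using ts assms(2,3)
    by (intro add_mono psum_le_var_length) (auto simp: sorted_append sorted_wrt_filter)
  finally show "psum d (map f ts) \<le> var_length d a m f + var_length d m b f" .
qed

abbreviation "Dist \<equiv> (\<lambda>x y. ennreal (dist x y))"

lemma Dist_tri: "Dist x z \<le> Dist x y + Dist y z"
  by (simp add: dist_triangle ennreal_plus[symmetric] del: ennreal_plus)

lemma psum_Dist_sum: "psum Dist (map F ts) = ennreal (\<Sum>i < length ts - 1. dist (F (ts ! i)) (F (ts ! Suc i)))"
  by (simp add: sum_psum_map[symmetric] sum_ennreal)

lemma abs_cont_piece:
  assumes dl: "\<forall>(n::nat) (l::nat\<Rightarrow>real) (r::nat\<Rightarrow>real). (\<forall>i<n. a \<le> l i \<and> l i \<le> r i \<and> r i \<le> b) \<and>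
        (\<forall>i<n. \<forall>j<n. i \<noteq> j \<longrightarrow> {l i<..<r i} \<inter> {l j<..<r j} = {}) \<and>
        (\<Sum>i<n. r i - l i) < \<delta> \<longrightarrow> (\<Sum>i<n. dist (F (l i)) (F (r i))) < 1"
    and "a \<le> c" "e \<le> b" "e - c < \<delta>" "\<delta> > 0"
  shows "var_length Dist c e F \<le> 1"
  unfolding var_length_psum
proof (rule SUP_least)
  fix ts assume ts: "ts \<in> {ts. sorted ts \<and> set ts \<subseteq> {c..e}}"
  let ?n = "length ts - 1"
  let ?l = "\<lambda>i. ts ! i" and ?r = "\<lambda>i. ts ! Suc i"
  have srt: "sorted ts" and sub: "set ts \<subseteq> {c..e}" using ts by auto
  have inr: "c \<le> ts ! i \<and> ts ! i \<le> e" if "i < length ts" for i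
    using sub nth_mem[OF that] by auto
  have mono: "ts ! i \<le> ts ! j" if "i \<le> j" "j < length ts" for i j
    using srt that by (simp add: sorted_iff_nth_mono)
  have c1: "\<forall>i<?n. a \<le> ?l i \<and> ?l i \<le> ?r i \<and> ?r i \<le> b"
  proof (intro allI impI)
    fix i assume "i < ?n"
    then have "i < length ts" "Suc i < length ts" by auto
    then show "a \<le> ?l i \<and> ?l i \<le> ?r i \<and> ?r i \<le> b"
      using inr[of i] inr[of "Suc i"] mono[of i "Suc i"] assms(2,3) by auto
  qed
  have c2: "\<forall>i<?n. \<forall>j<?n. i \<noteq> j \<longrightarrow> {?l i<..<?r i} \<inter> {?l j<..<?r j} = {}"
  proof (intro allI impI)
    fix i j assume ij: "i < ?n" "j < ?n" "i \<noteq> j"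
    show "{?l i<..<?r i} \<inter> {?l j<..<?r j} = {}"
    proof (cases "i < j")
      case True
      then have "?r i \<le> ?l j" using mono[of "Suc i" j] ij by auto
      then show ?thesis by auto
    next
      case False
      then have "?r j \<le> ?l i" using mono[of "Suc j" i] ij by auto
      then show ?thesis by auto
    qed
  qed
  have c3: "(\<Sum>i<?n. ?r i - ?l i) < \<delta>"
  proof -
    have "(\<Sum>i<?n. ?r i - ?l i) = ts ! ?n - ts ! 0" by (rule sum_lessThan_telescope)
    also have "\<dots> < \<delta>"
    proof (cases "ts = []")
      case True
      then show ?thesis using assms(5) by simp
    next
      case False
      then have "ts ! ?n \<le> e" "c \<le> ts ! 0" using inr[of ?n] inr[of 0] by auto
      then show ?thesis using assms(4) by simp
    qed
    finally show ?thesis .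
  qed
  have "(\<Sum>i<?n. dist (F (?l i)) (F (?r i))) < 1"
    using dl[rule_format, where n="?n" and l="?l" and r="?r"] c1 c2 c3 by blast
  then show "psum Dist (map F ts) \<le> 1" unfolding psum_Dist_sum by simp
qed

lemma abs_cont_finite:
  assumes ac: "abs_cont_on a b F" and ab: "a \<le> b"
  shows "var_length Dist a b F < top"
proof -
  obtain \<delta> where dpos: "\<delta> > 0" and dl: "\<forall>(n::nat) (l::nat\<Rightarrow>real) (r::nat\<Rightarrow>real). (\<forall>i<n. a \<le> l i \<and> l i \<le> r i \<and> r i \<le> b) \<and>
        (\<forall>i<n. \<forall>j<n. i \<noteq> j \<longrightarrow> {l i<..<r i} \<inter> {l j<..<r j} = {}) \<and>
        (\<Sum>i<n. r i - l i) < \<delta> \<longrightarrow> (\<Sum>i<n. dist (F (l i)) (F (r i))) < 1"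
    using ac[unfolded abs_cont_on_def, rule_format, OF zero_less_one] by blast
  define N :: nat where "N = nat \<lceil>(b - a) / \<delta>\<rceil> + 1"
  define h where "h = (b - a) / N"
  have Npos: "real N > 0" unfolding N_def by simp
  have "(b - a) / \<delta> < real N" unfolding N_def by linarith
  then have "b - a < real N * \<delta>" using dpos by (simp add: field_simps)
  then have hd: "h < \<delta>" unfolding h_def using Npos by (simp add: field_simps)
  have h0: "h \<ge> 0" unfolding h_def using ab Npos by simp
  have bN: "a + real N * h = b" unfolding h_def using Npos by simp
  have step: "var_length Dist a (a + real k * h) F \<le> of_nat (Suc k)" if "k \<le> N" for k
    using that
  proof (induction k)
    case 0
    show ?case using abs_cont_piece[OF dl, of a a] dpos ab by simp
  next
    case (Suc k)
    have le1: "a + real k * h \<le> a + real (Suc k) * h" using h0 by (simp add: algebra_simps)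
    have le2: "a + real (Suc k) * h \<le> b"
      using bN Suc.prems h0 by (metis add_le_cancel_left mult_right_mono of_nat_le_iff)
    have ak: "a \<le> a + real k * h" using h0 by simp
    have "var_length Dist a (a + real (Suc k) * h) F \<le>
          var_length Dist a (a + real k * h) F + var_length Dist (a + real k * h) (a + real (Suc k) * h) F"
      by (rule var_length_subadd[OF Dist_tri ak le1])
    also have "\<dots> \<le> of_nat (Suc k) + 1"
      using Suc abs_cont_piece[OF dl, of "a + real k * h" "a + real (Suc k) * h"] ak le2 hd dpos
      by (intro add_mono) (auto simp: algebra_simps)
    finally show ?case by (simp add: add_ac)
  qed
  from step[of N] have "var_length Dist a b F \<le> of_nat (Suc N)" using bN by simp
  then show ?thesis using order.strict_trans1 by (metis ennreal_less_top of_nat_less_top)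
qed

lemma psum_dist_close:
  assumes "\<forall>x\<in>set ts. dist (F x) (G x) \<le> \<eta>" "\<eta> \<ge> 0"
  shows "psum Dist (map F ts) \<le> psum Dist (map G ts) + ennreal (2 * \<eta> * length ts)"
  using assms(1)
proof (induction ts rule: induct_list012)
  case 1
  then show ?case by simp
next
  case (2 x)
  then show ?case by simp
next
  case (3 x y zs)
  have "dist (F x) (F y) \<le> dist (F x) (G x) + dist (G x) (F y)" by (rule dist_triangle)
  moreover have "dist (G x) (F y) \<le> dist (G x) (G y) + dist (G y) (F y)" by (rule dist_triangle)
  ultimately have "dist (F x) (F y) \<le> dist (F x) (G x) + dist (G x) (G y) + dist (G y) (F y)" by linarith
  also have "\<dots> \<le> dist (G x) (G y) + 2 * \<eta>" using "3.prems" by (simp add: dist_commute)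
  finally have t: "Dist (F x) (F y) \<le> Dist (G x) (G y) + ennreal (2 * \<eta>)"
    using assms(2) by (simp add: ennreal_plus[symmetric] del: ennreal_plus)
  have IH: "psum Dist (map F (y # zs)) \<le> psum Dist (map G (y # zs)) + ennreal (2 * \<eta> * length (y # zs))"
    using "3.IH"(2) "3.prems" by simp
  have "2 * \<eta> * length (x # y # zs) = 2 * \<eta> + 2 * \<eta> * length (y # zs)"
    by (simp add: algebra_simps)
  then have sp: "ennreal (2 * \<eta> * length (x # y # zs)) = ennreal (2 * \<eta>) + ennreal (2 * \<eta> * length (y # zs))"
    using assms(2) by (simp add: ennreal_plus[symmetric] del: ennreal_plus)
  have "psum Dist (map F (x # y # zs)) = Dist (F x) (F y) + psum Dist (map F (y # zs))" by simp
  also have "\<dots> \<le> (Dist (G x) (G y) + ennreal (2 * \<eta>)) + (psum Dist (map G (y # zs)) + ennreal (2 * \<eta> * length (y # zs)))"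
    using t IH by (rule add_mono)
  also have "\<dots> = psum Dist (map G (x # y # zs)) + ennreal (2 * \<eta> * length (x # y # zs))"
    unfolding sp by (simp only: list.map psum.simps ac_simps)
  finally show ?case .
qed

lemma uniform_delta:
  assumes "continuous_on UNIV u" "\<eta> > 0"
  shows "\<exists>\<delta>>0. \<forall>x\<in>set ts. \<forall>y. dist y (g x) < \<delta> \<longrightarrow> dist (u y) (u (g x)) < \<eta>"
proof (induction ts)
  case Nil
  then show ?case by (auto intro: exI[of _ 1])
next
  case (Cons x ts)
  then obtain \<delta>1 where d1: "\<delta>1 > 0" "\<forall>x\<in>set ts. \<forall>y. dist y (g x) < \<delta>1 \<longrightarrow> dist (u y) (u (g x)) < \<eta>" by blast
  obtain \<delta>2 where d2: "\<delta>2 > 0" "\<forall>y. dist y (g x) < \<delta>2 \<longrightarrow> dist (u y) (u (g x)) < \<eta>"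
    using assms(1)[unfolded continuous_on_iff, rule_format, of "g x" \<eta>] assms(2) by auto
  show ?case
  proof (intro exI[of _ "min \<delta>1 \<delta>2"] conjI ballI allI impI)
    show "min \<delta>1 \<delta>2 > 0" using d1 d2 by simp
    fix z y assume z: "z \<in> set (x # ts)" and y: "dist y (g z) < min \<delta>1 \<delta>2"
    show "dist (u y) (u (g z)) < \<eta>"
    proof (cases "z = x")
      case True
      then show ?thesis using d2 y by simp
    next
      case False
      then have "z \<in> set ts" using z by simp
      then show ?thesis using d1 y by simp
    qed
  qed
qed

lemma eta_pos: "(e::real) > 0 \<Longrightarrow> e / (2 + 2 * real n) > 0"
  by (simp add: add_pos_nonneg)
lemma eta_bound: assumes "(e::real) > 0" shows "2 * (e / (2 + 2 * real n)) * real n \<le> e"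
proof -
  have p: "2 + 2 * real n > 0" by (simp add: add_pos_nonneg)
  have "2 * (e / (2 + 2 * real n)) * real n = e * (2 * real n / (2 + 2 * real n))" by simp
  also have "\<dots> \<le> e * 1" using assms p by (intro mult_left_mono) auto
  finally show ?thesis by simp
qed

lemma lsc_partition:
  assumes "continuous_on UNIV u" "e > 0"
  shows "\<exists>\<delta>>0. \<forall>h. (\<forall>x\<in>set ts. dist (h x) (g x) < \<delta>) \<longrightarrow>
     psum Dist (map (u \<circ> g) ts) \<le> psum Dist (map (u \<circ> h) ts) + ennreal e"
proof -
  define \<eta> where "\<eta> = e / (2 + 2 * real (length ts))"
  have \<eta>: "\<eta> > 0" unfolding \<eta>_def using assms(2) by (rule eta_pos)
  have le: "2 * \<eta> * length ts \<le> e" unfolding \<eta>_def using assms(2) by (rule eta_bound)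
  obtain \<delta> where d: "\<delta> > 0" "\<forall>x\<in>set ts. \<forall>y. dist y (g x) < \<delta> \<longrightarrow> dist (u y) (u (g x)) < \<eta>"
    using uniform_delta[OF assms(1) \<eta>, where ts=ts and g=g] by blast
  show ?thesis
  proof (intro exI[of _ \<delta>] conjI allI impI)
    fix h assume h: "\<forall>x\<in>set ts. dist (h x) (g x) < \<delta>"
    have "\<forall>x\<in>set ts. dist ((u \<circ> g) x) ((u \<circ> h) x) \<le> \<eta>"
    proof
      fix x assume x: "x \<in> set ts"
      have "dist (u (h x)) (u (g x)) < \<eta>" using d(2) x h by blast
      then show "dist ((u \<circ> g) x) ((u \<circ> h) x) \<le> \<eta>" by (simp add: dist_commute)
    qed
    then have "psum Dist (map (u \<circ> g) ts) \<le> psum Dist (map (u \<circ> h) ts) + ennreal (2 * \<eta> * length ts)"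
      using \<eta> by (intro psum_dist_close) auto
    also have "\<dots> \<le> psum Dist (map (u \<circ> h) ts) + ennreal e"
      using le by (intro add_left_mono ennreal_leI)
    finally show "psum Dist (map (u \<circ> g) ts) \<le> psum Dist (map (u \<circ> h) ts) + ennreal e" .
  qed (rule d(1))
qed

lemma p_modulus_empty: "p_modulus \<mu> p {} = 0"
proof -
  have "p_modulus \<mu> p {} \<le> (\<integral>\<^sup>+x. enn_powr ((\<lambda>_. 0) x) p \<partial>\<mu>)"
    unfolding p_modulus_def by (rule INF_lower) simp
  also have "\<dots> = 0" by (simp add: enn_powr_def)
  finally show ?thesis by simp
qed

lemma p_modulus_mono_adm:
  assumes "\<And>\<rho>. \<rho> \<in> borel_measurable borel \<Longrightarrow> (\<forall>c\<in>\<Gamma>. 1 \<le> line_integral \<rho> c) \<Longrightarrow> (\<forall>c\<in>\<Gamma>'. 1 \<le> line_integral \<rho> c)"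
  shows "p_modulus \<mu> p \<Gamma>' \<le> p_modulus \<mu> p \<Gamma>"
  unfolding p_modulus_def by (rule INF_superset_mono) (use assms in auto)

lemma p_modulus_zero_curve:
  assumes "c \<in> \<Gamma>" "\<And>\<rho>. line_integral \<rho> c = 0"
  shows "p_modulus \<mu> p \<Gamma> = top"
proof -
  have "{\<rho>. \<rho> \<in> borel_measurable borel \<and> (\<forall>c\<in>\<Gamma>. 1 \<le> line_integral \<rho> c)} = {}"
    using assms by fastforce
  then show ?thesis unfolding p_modulus_def by (simp only: INF_empty)
qed

lemma ess_len_ge: "(INF c\<in>\<Gamma>. (case c of (a, b, \<gamma>) \<Rightarrow> curve_length a b (u \<circ> \<gamma>))) \<le> ess_len \<mu> p u \<Gamma>"
  unfolding ess_len_def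
  by (rule SUP_upper2[of "{}"]) (auto simp: p_modulus_empty)

lemma ess_len_le:
  assumes "\<And>\<Gamma>0. p_modulus \<mu> p \<Gamma>0 = 0 \<Longrightarrow> (INF c\<in>\<Gamma> - \<Gamma>0. (case c of (a, b, \<gamma>) \<Rightarrow> curve_length a b (u \<circ> \<gamma>))) \<le> T"
  shows "ess_len \<mu> p u \<Gamma> \<le> T"
  unfolding ess_len_def by (rule SUP_least) (use assms in auto)

lemma ess_len_obtain:
  assumes "ess_len \<mu> p u \<Gamma> \<le> L" "p_modulus \<mu> p \<Gamma>0 = 0" "L < x"
  shows "\<exists>c\<in>\<Gamma> - \<Gamma>0. (case c of (a, b, \<gamma>) \<Rightarrow> curve_length a b (u \<circ> \<gamma>)) < x"
proof -
  have "(INF c\<in>\<Gamma> - \<Gamma>0. (case c of (a, b, \<gamma>) \<Rightarrow> curve_length a b (u \<circ> \<gamma>))) \<le> ess_len \<mu> p u \<Gamma>"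
    unfolding ess_len_def by (rule SUP_upper) (use assms(2) in simp)
  then have "(INF c\<in>\<Gamma> - \<Gamma>0. (case c of (a, b, \<gamma>) \<Rightarrow> curve_length a b (u \<circ> \<gamma>))) < x"
    using assms(1,3) by (meson order.trans order.strict_trans1)
  then show ?thesis by (simp add: INF_less_iff)
qed

lemma ess_len_antimono: "\<Gamma> \<subseteq> \<Gamma>' \<Longrightarrow> ess_len \<mu> p u \<Gamma>' \<le> ess_len \<mu> p u \<Gamma>"
  unfolding ess_len_def by (intro SUP_mono) (blast intro: INF_superset_mono)

lemma line_integral_sub:
  assumes "a \<le> t" "s \<le> b"
  shows "line_integral \<rho> (t, s, h) \<le> line_integral \<rho> (a, b, h)"
  unfolding line_integral_def using assms
  by (auto intro!: nn_integral_mono mult_left_mono split: split_indicator)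

lemma SUP_approx_ennreal:
  fixes f :: "'i \<Rightarrow> ennreal"
  assumes "X = (SUP i\<in>I. f i)" "X < top" "I \<noteq> {}" "e > 0"
  shows "\<exists>i\<in>I. X \<le> f i + ennreal e"
proof -
  obtain x where x: "X = ennreal x" "x \<ge> 0" using assms(2) by (cases X) auto
  show ?thesis
  proof (cases "x \<le> e")
    case True
    from assms(3) obtain i where "i \<in> I" by blast
    moreover have "X \<le> f i + ennreal e"
      using True x by (metis add.commute add_increasing2 ennreal_leI zero_le)
    ultimately show ?thesis by blast
  next
    case False
    then have "ennreal (x - e) < X" using x assms(4) by (simp add: ennreal_lessI)
    then obtain i where i: "i \<in> I" "ennreal (x - e) < f i" using assms(1) by (auto simp: less_SUP_iff)
    have "X = ennreal (x - e) + ennreal e" using x False assms(4) by (simp add: ennreal_plus[symmetric] del: ennreal_plus)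
    also have "\<dots> \<le> f i + ennreal e" using i by (intro add_right_mono) simp
    finally show ?thesis using i by blast
  qed
qed

lemma curve_length_var: "curve_length a b f = var_length Dist a b f"
  unfolding curve_length_def ..

lemma regular_restrict:
  assumes cu: "continuous_on UNIV u" and reg: "regular_curve \<mu> p u (a, b, g)"
    and at: "a \<le> t" and ts: "t \<le> s" and sb: "s \<le> b"
  shows "regular_curve \<mu> p u (t, s, g)"
proof -
  have lip: "lip_curve (a, b, g)" and ac: "abs_cont_on a b (u \<circ> g)"
    and rb: "\<And>\<delta>. \<delta> > 0 \<Longrightarrow> ess_len \<mu> p u (curve_ball (a, b, g) \<delta>) \<le> curve_length a b (u \<circ> g)"
    using reg unfolding regular_curve_def by auto
  from lip obtain K where ab: "a \<le> b" and K: "K-lipschitz_on {a..b} g" unfolding lip_curve_def by auto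
  have lip': "lip_curve (t, s, g)"
    unfolding lip_curve_def using ts lipschitz_on_subset[OF K, of "{t..s}"] at sb by auto
  have ac': "abs_cont_on t s (u \<circ> g)"
    unfolding abs_cont_on_def
  proof (intro allI impI)
    fix \<epsilon> :: real assume "\<epsilon> > 0"
    then obtain \<delta> where d: "\<delta> > 0" and H: "\<forall>(n::nat) (l::nat\<Rightarrow>real) (r::nat\<Rightarrow>real).
        (\<forall>i<n. a \<le> l i \<and> l i \<le> r i \<and> r i \<le> b) \<and>
        (\<forall>i<n. \<forall>j<n. i \<noteq> j \<longrightarrow> {l i<..<r i} \<inter> {l j<..<r j} = {}) \<and>
        (\<Sum>i<n. r i - l i) < \<delta> \<longrightarrow> (\<Sum>i<n. dist ((u \<circ> g) (l i)) ((u \<circ> g) (r i))) < \<epsilon>"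
      using ac[unfolded abs_cont_on_def, rule_format, of \<epsilon>] by blast
    show "\<exists>\<delta>>0. \<forall>(n::nat) (l::nat\<Rightarrow>real) (r::nat\<Rightarrow>real).
        (\<forall>i<n. t \<le> l i \<and> l i \<le> r i \<and> r i \<le> s) \<and>
        (\<forall>i<n. \<forall>j<n. i \<noteq> j \<longrightarrow> {l i<..<r i} \<inter> {l j<..<r j} = {}) \<and>
        (\<Sum>i<n. r i - l i) < \<delta> \<longrightarrow> (\<Sum>i<n. dist ((u \<circ> g) (l i)) ((u \<circ> g) (r i))) < \<epsilon>"
    proof (intro exI[of _ \<delta>] conjI allI impI)
      show "\<delta> > 0" by (rule d)
      fix n :: nat and l r :: "nat \<Rightarrow> real"
      assume A: "(\<forall>i<n. t \<le> l i \<and> l i \<le> r i \<and> r i \<le> s) \<and>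
        (\<forall>i<n. \<forall>j<n. i \<noteq> j \<longrightarrow> {l i<..<r i} \<inter> {l j<..<r j} = {}) \<and>
        (\<Sum>i<n. r i - l i) < \<delta>"
      have "\<forall>i<n. a \<le> l i \<and> l i \<le> r i \<and> r i \<le> b" using A at sb by force
      then show "(\<Sum>i<n. dist ((u \<circ> g) (l i)) ((u \<circ> g) (r i))) < \<epsilon>"
        using H[rule_format, where n=n and l=l and r=r] A by blast
    qed
  qed
  define F where "F = u \<circ> g"
  define L where "L = var_length Dist a b F"
  define A where "A = var_length Dist a t F"
  define T where "T = var_length Dist t s F"
  define S where "S = var_length Dist s b F"
  have Lfin: "L < top" unfolding L_def F_def by (rule abs_cont_finite[OF ac ab])
  have "A + T \<le> var_length Dist a s F" unfolding A_def T_def by (rule var_length_superadd[OF ts at])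
  moreover have "var_length Dist a s F + S \<le> L" unfolding S_def L_def
    by (rule var_length_superadd[OF sb]) (use at ts in linarith)
  ultimately have ATS: "A + T + S \<le> L" by (meson add_right_mono order_trans)
  have "L \<le> var_length Dist a s F + S" unfolding S_def L_def
    by (rule var_length_subadd[OF Dist_tri]) (use at ts sb in linarith)+
  moreover have "var_length Dist a s F \<le> A + T" unfolding A_def T_def
    by (rule var_length_subadd[OF Dist_tri at ts])
  ultimately have LATS: "L \<le> A + T + S" by (meson add_right_mono order_trans)
  have Afin: "A < top" and Sfin: "S < top" using ATS Lfin
    by (metis add_top order_le_less_trans top.not_eq_extremum ennreal_add_eq_top)+
  have main: "ess_len \<mu> p u (curve_ball (t, s, g) \<delta>) \<le> curve_length t s (u \<circ> g)" if "\<delta> > 0" for \<delta>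
    unfolding curve_length_var F_def[symmetric] T_def[symmetric]
  proof (rule ess_len_le)
    fix \<Gamma>0 assume null: "p_modulus \<mu> p \<Gamma>0 = (0::ennreal)"
    show "(INF c\<in>curve_ball (t, s, g) \<delta> - \<Gamma>0. (case c of (a, b, \<gamma>) \<Rightarrow> curve_length a b (u \<circ> \<gamma>))) \<le> T"
    proof (rule ennreal_le_epsilon)
      fix e :: real assume e: "e > 0"
      define e' where "e' = e / 5"
      have e': "e' > 0" unfolding e'_def using e by simp
      define E where "E = ennreal e'"
      have E5: "E + E + E + E + E = ennreal e"
        unfolding E_def using e' by (simp add: ennreal_plus[symmetric] e'_def del: ennreal_plus)
      obtain PA where PA: "sorted PA" "set PA \<subseteq> {a..t}" and PA': "A \<le> psum Dist (map F PA) + E"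
      proof -
        have ne: "{ts::real list. sorted ts \<and> set ts \<subseteq> {a..t}} \<noteq> {}" by (auto intro!: exI[of _ "[]"])
        show ?thesis using SUP_approx_ennreal[OF A_def[unfolded var_length_psum] Afin ne e'] that unfolding E_def
          by blast
      qed
      obtain PS where PS: "sorted PS" "set PS \<subseteq> {s..b}" and PS': "S \<le> psum Dist (map F PS) + E"
      proof -
        have ne: "{ts::real list. sorted ts \<and> set ts \<subseteq> {s..b}} \<noteq> {}" by (auto intro!: exI[of _ "[]"])
        show ?thesis using SUP_approx_ennreal[OF S_def[unfolded var_length_psum] Sfin ne e'] that unfolding E_def
          by blast
      qed
      obtain \<delta>a where da: "\<delta>a > 0" and DA: "\<forall>h. (\<forall>x\<in>set PA. dist (h x) (g x) < \<delta>a) \<longrightarrow>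
          psum Dist (map (u \<circ> g) PA) \<le> psum Dist (map (u \<circ> h) PA) + E"
        using lsc_partition[OF cu e', where ts=PA and g=g] unfolding E_def by blast
      obtain \<delta>s where ds: "\<delta>s > 0" and DS: "\<forall>h. (\<forall>x\<in>set PS. dist (h x) (g x) < \<delta>s) \<longrightarrow>
          psum Dist (map (u \<circ> g) PS) \<le> psum Dist (map (u \<circ> h) PS) + E"
        using lsc_partition[OF cu e', where ts=PS and g=g] unfolding E_def by blast
      define \<delta>' where "\<delta>' = min \<delta> (min \<delta>a \<delta>s)"
      have d': "\<delta>' > 0" unfolding \<delta>'_def using that da ds by simp
      define \<Gamma>1 where "\<Gamma>1 = {(a, b, h) | h. (t, s, h) \<in> \<Gamma>0}"
      have null1: "p_modulus \<mu> p \<Gamma>1 = 0"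
      proof -
        have "p_modulus \<mu> p \<Gamma>1 \<le> p_modulus \<mu> p \<Gamma>0"
        proof (rule p_modulus_mono_adm)
          fix \<rho> :: "'a \<Rightarrow> ennreal" assume adm: "\<forall>c\<in>\<Gamma>0. 1 \<le> line_integral \<rho> c"
          show "\<forall>c\<in>\<Gamma>1. 1 \<le> line_integral \<rho> c"
          proof
            fix c assume "c \<in> \<Gamma>1"
            then obtain h where c: "c = (a, b, h)" and h: "(t, s, h) \<in> \<Gamma>0" unfolding \<Gamma>1_def by blast
            have "1 \<le> line_integral \<rho> (t, s, h)" using adm h by blast
            also have "\<dots> \<le> line_integral \<rho> (a, b, h)" by (rule line_integral_sub[OF at sb])
            finally show "1 \<le> line_integral \<rho> c" unfolding c .
          qed
        qed
        then show ?thesis using null by simp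
      qed
      obtain l where l: "L = ennreal l" "l \<ge> 0" using Lfin by (cases L) auto
      have LE: "L < L + E" unfolding l E_def using e' by (simp add: ennreal_plus[symmetric] del: ennreal_plus)
      obtain c where c: "c \<in> curve_ball (a, b, g) \<delta>' - \<Gamma>1"
        and cl: "(case c of (a, b, \<gamma>) \<Rightarrow> curve_length a b (u \<circ> \<gamma>)) < L + E"
        using ess_len_obtain[OF rb[OF d'] null1, of "L + E"] LE unfolding L_def F_def curve_length_var
        by blast
      then obtain h where ch: "c = (a, b, h)" and liph: "lip_curve (a, b, h)"
        and sup: "(SUP x\<in>{a..b}. ereal (dist (h x) (g x))) < ereal \<delta>'"
        unfolding curve_ball_def by auto
      have c1: "(a, b, h) \<notin> \<Gamma>1" using c ch by simp
      have pw: "dist (h x) (g x) < \<delta>'" if "x \<in> {a..b}" for x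
      proof -
        have "ereal (dist (h x) (g x)) \<le> (SUP x\<in>{a..b}. ereal (dist (h x) (g x)))"
          using that by (rule SUP_upper)
        then have "ereal (dist (h x) (g x)) < ereal \<delta>'" using sup by (rule order.strict_trans1)
        then show ?thesis by simp
      qed
      define H where "H = u \<circ> h"
      have VH: "var_length Dist a b H < L + E" using cl unfolding ch H_def curve_length_var by simp
      have "A \<le> psum Dist (map F PA) + E" by (rule PA')
      also have "\<dots> \<le> (psum Dist (map H PA) + E) + E"
      proof -
        have "\<forall>x\<in>set PA. dist (h x) (g x) < \<delta>a"
          using PA(2) pw ab ts sb unfolding \<delta>'_def by fastforce
        then show ?thesis using DA unfolding F_def H_def by (intro add_right_mono) blast
      qed
      also have "\<dots> \<le> (var_length Dist a t H + E) + E"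
        using PA by (intro add_right_mono psum_le_var_length)
      finally have A1: "A \<le> var_length Dist a t H + E + E" .
      have "S \<le> psum Dist (map F PS) + E" by (rule PS')
      also have "\<dots> \<le> (psum Dist (map H PS) + E) + E"
      proof -
        have "\<forall>x\<in>set PS. dist (h x) (g x) < \<delta>s"
          using PS(2) pw ab ts at unfolding \<delta>'_def by fastforce
        then show ?thesis using DS unfolding F_def H_def by (intro add_right_mono) blast
      qed
      also have "\<dots> \<le> (var_length Dist s b H + E) + E"
        using PS by (intro add_right_mono psum_le_var_length)
      finally have S1: "S \<le> var_length Dist s b H + E + E" .
      define X where "X = var_length Dist t s H"
      have "var_length Dist a t H + X \<le> var_length Dist a s H" unfolding X_def
        by (rule var_length_superadd[OF ts at])
      moreover have "var_length Dist a s H + var_length Dist s b H \<le> var_length Dist a b H"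
        by (rule var_length_superadd[OF sb]) (use at ts in linarith)
      ultimately have H3: "var_length Dist a t H + X + var_length Dist s b H \<le> L + E"
        using VH by (meson add_right_mono order_trans less_imp_le)
      have "(A + S) + X \<le> (var_length Dist a t H + E + E) + (var_length Dist s b H + E + E) + X"
        using A1 S1 by (intro add_mono) auto
      also have "\<dots> = (var_length Dist a t H + X + var_length Dist s b H) + (E + E + E + E)"
        by (simp add: ac_simps)
      also have "\<dots> \<le> (L + E) + (E + E + E + E)"
        using H3 by (rule add_right_mono)
      also have "\<dots> \<le> (A + T + S + E) + (E + E + E + E)"
        using LATS by (intro add_right_mono)
      also have "\<dots> = (A + S) + (T + (E + E + E + E + E))"
        by (simp add: ac_simps)
      finally have "(A + S) + X \<le> (A + S) + (T + ennreal e)" unfolding E5 .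
      moreover have "A + S \<noteq> \<infinity>" using Afin Sfin by (simp add: ennreal_add_eq_top less_top)
      ultimately have XT: "X \<le> T + ennreal e" by (simp add: ennreal_add_left_cancel_le)
      have inball: "(t, s, h) \<in> curve_ball (t, s, g) \<delta> - \<Gamma>0"
      proof -
        obtain K' where "K'-lipschitz_on {a..b} h" using liph unfolding lip_curve_def by auto
        then have "lip_curve (t, s, h)" unfolding lip_curve_def
          using ts lipschitz_on_subset[of K' "{a..b}" h "{t..s}"] at sb by auto
        moreover have "(SUP x\<in>{t..s}. ereal (dist (h x) (g x))) < ereal \<delta>"
        proof -
          have "(SUP x\<in>{t..s}. ereal (dist (h x) (g x))) \<le> (SUP x\<in>{a..b}. ereal (dist (h x) (g x)))"
            using at sb by (intro SUP_subset_mono) auto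
          also have "\<dots> < ereal \<delta>'" by (rule sup)
          also have "\<dots> \<le> ereal \<delta>" unfolding \<delta>'_def by simp
          finally show ?thesis .
        qed
        moreover have "(t, s, h) \<notin> \<Gamma>0" using c1 unfolding \<Gamma>1_def by blast
        ultimately show ?thesis unfolding curve_ball_def by blast
      qed
      have "(INF c\<in>curve_ball (t, s, g) \<delta> - \<Gamma>0. (case c of (a, b, \<gamma>) \<Rightarrow> curve_length a b (u \<circ> \<gamma>)))
          \<le> (case (t, s, h) of (a, b, \<gamma>) \<Rightarrow> curve_length a b (u \<circ> \<gamma>))"
        using inball by (rule INF_lower)
      also have "\<dots> = X" unfolding X_def H_def curve_length_var by simp
      finally show "(INF c\<in>curve_ball (t, s, g) \<delta> - \<Gamma>0. (case c of (a, b, \<gamma>) \<Rightarrow> curve_length a b (u \<circ> \<gamma>))) \<le> T + ennreal e"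
        using XT by (rule order_trans)
    qed
  qed
  show ?thesis unfolding regular_curve_def using lip' ac' main by auto
qed

lemma e2ennreal_mult_pos:
  assumes "c > 0"
  shows "e2ennreal (ereal c * X) = ennreal c * e2ennreal X"
proof (cases X)
  case (real r)
  then show ?thesis
  proof (cases "r \<ge> 0")
    case True
    then show ?thesis using real assms by (simp add: ennreal_mult)
  next
    case False
    then have "c * r \<le> 0" using assms by (simp add: mult_nonneg_nonpos)
    then show ?thesis using real False by (simp add: ennreal_neg)
  qed
next
  case PInf
  then show ?thesis using assms by (simp add: ennreal_mult_top)
next
  case MInf
  then show ?thesis using assms by (simp add: e2ennreal_neg)
qed

lemma filtermap_times_at0:
  assumes "(c::real) \<noteq> 0"
  shows "filtermap (\<lambda>k. c * k) (at 0) = at 0"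
proof (rule filtermap_fun_inverse[where g="\<lambda>x. x / c"])
  show "filterlim (\<lambda>x. x / c) (at 0) (at (0::real))"
    by (rule filterlim_atI) (auto intro!: tendsto_eq_intros simp: assms eventually_at_filter)
  show "filterlim (\<lambda>k. c * k) (at 0) (at (0::real))"
    by (rule filterlim_atI) (auto intro!: tendsto_eq_intros simp: assms eventually_at_filter)
  show "\<forall>\<^sub>F x in at 0. c * (x / c) = x" using assms by simp
qed

lemma metric_speed_affine:
  assumes c: "c > 0"
  shows "metric_speed (\<lambda>x. h (t + c * x)) x = ennreal c * metric_speed h (t + c * x)"
proof -
  define y where "y = t + c * x"
  define q where "q = (\<lambda>k. ereal (dist (h (y + k)) (h y) / \<bar>k\<bar>))"
  have eq: "(\<lambda>k. ereal (dist (h (t + c * (x + k))) (h (t + c * x)) / \<bar>k\<bar>)) = (\<lambda>k. ereal c * q (c * k))"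
  proof
    fix k :: real
    have e1: "t + c * (x + k) = y + c * k" unfolding y_def by (simp add: algebra_simps)
    show "ereal (dist (h (t + c * (x + k))) (h (t + c * x)) / \<bar>k\<bar>) = ereal c * q (c * k)"
    proof (cases "k = 0")
      case True
      then show ?thesis unfolding q_def by simp
    next
      case False
      have "dist (h (y + c * k)) (h y) / \<bar>k\<bar> = c * (dist (h (y + c * k)) (h y) / \<bar>c * k\<bar>)"
        using c False by (simp add: abs_mult field_simps)
      then show ?thesis unfolding q_def e1 y_def[symmetric] by simp
    qed
  qed
  have "Limsup (at (0::real)) (\<lambda>k. ereal c * q (c * k)) = ereal c * Limsup (at 0) (\<lambda>k. q (c * k))"
    by (rule Limsup_ereal_mult_left) (use c in auto)
  also have "Limsup (at (0::real)) (\<lambda>k. q (c * k)) = Limsup (filtermap (\<lambda>k. c * k) (at 0)) q"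
    by (rule Limsup_filtermap_eq[symmetric]) (use c in \<open>auto simp: inj_on_def\<close>)
  also have "\<dots> = Limsup (at 0) q" using c by (simp add: filtermap_times_at0)
  finally have L: "Limsup (at (0::real)) (\<lambda>k. ereal c * q (c * k)) = ereal c * Limsup (at 0) q" .
  have "metric_speed (\<lambda>x. h (t + c * x)) x
      = e2ennreal (Limsup (at 0) (\<lambda>k. ereal (dist (h (t + c * (x + k))) (h (t + c * x)) / \<bar>k\<bar>)))"
    unfolding metric_speed_def by simp
  also have "\<dots> = e2ennreal (Limsup (at 0) (\<lambda>k. ereal c * q (c * k)))" by (simp only: eq)
  also have "\<dots> = e2ennreal (ereal c * Limsup (at 0) q)" by (simp only: L)
  also have "\<dots> = ennreal c * e2ennreal (Limsup (at 0) q)" by (rule e2ennreal_mult_pos[OF c])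
  also have "e2ennreal (Limsup (at 0) q) = metric_speed h (t + c * x)"
    unfolding metric_speed_def q_def y_def ..
  finally show ?thesis .
qed

lemma nn_integral_affine_le:
  fixes G :: "real \<Rightarrow> ennreal"
  assumes c: "c > 0"
  shows "(\<integral>\<^sup>+x. G (t + c * x) * ennreal c \<partial>lborel) \<le> (\<integral>\<^sup>+y. G y \<partial>lborel)"
  unfolding nn_integral_def[of lborel "\<lambda>x. G (t + c * x) * ennreal c"]
proof (rule SUP_least)
  fix \<sigma> assume "\<sigma> \<in> {g. simple_function lborel g \<and> g \<le> (\<lambda>x. G (t + c * x) * ennreal c)}"
  then have sf: "simple_function lborel \<sigma>" and le: "\<And>x. \<sigma> x \<le> G (t + c * x) * ennreal c"
    by (auto simp: le_fun_def)
  have m: "\<sigma> \<in> borel_measurable borel"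
    using borel_measurable_simple_function[OF sf] by simp
  define \<sigma>' where "\<sigma>' = (\<lambda>y. \<sigma> ((y - t) / c) * ennreal (1 / c))"
  have m': "\<sigma>' \<in> borel_measurable borel" unfolding \<sigma>'_def using m by measurable
  have "integral\<^sup>S lborel \<sigma> = (\<integral>\<^sup>+x. \<sigma> x \<partial>lborel)"
    by (rule nn_integral_eq_simple_integral[OF sf, symmetric])
  also have "\<dots> = ennreal c * ((\<integral>\<^sup>+x. \<sigma> x \<partial>lborel) * ennreal (1 / c))"
  proof -
    have "ennreal c * ennreal (1 / c) = 1" using c by (simp add: ennreal_mult[symmetric])
    then show ?thesis by (metis mult.assoc mult.commute mult_1)
  qed
  also have "\<dots> = ennreal c * (\<integral>\<^sup>+x. \<sigma>' (t + c * x) \<partial>lborel)"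
    unfolding \<sigma>'_def using c m by (simp add: nn_integral_multc)
  also have "\<dots> = (\<integral>\<^sup>+y. \<sigma>' y \<partial>lborel)"
    using nn_integral_real_affine[OF m', of c t] c by simp
  also have "\<dots> \<le> (\<integral>\<^sup>+y. G y \<partial>lborel)"
  proof (rule nn_integral_mono)
    fix y
    have "\<sigma> ((y - t) / c) \<le> G (t + c * ((y - t) / c)) * ennreal c" by (rule le)
    also have "t + c * ((y - t) / c) = y" using c by simp
    finally have "\<sigma>' y \<le> G y * ennreal c * ennreal (1 / c)" unfolding \<sigma>'_def by (rule mult_right_mono) simp
    also have "\<dots> = G y" using c by (simp add: mult.assoc ennreal_mult[symmetric])
    finally show "\<sigma>' y \<le> G y" .
  qed
  finally show "integral\<^sup>S lborel \<sigma> \<le> (\<integral>\<^sup>+y. G y \<partial>lborel)" .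
qed

lemma line_integral_affine:
  assumes ts: "t < s"
  shows "line_integral \<rho> (0, 1, \<lambda>x. h (t + (s - t) * x)) \<le> line_integral \<rho> (t, s, h)"
proof -
  define c where "c = s - t"
  have c: "c > 0" unfolding c_def using ts by simp
  define G where "G = (\<lambda>y. \<rho> (h y) * metric_speed h y * indicator {t..s} y)"
  have ind: "indicator {0..1} x = (indicator {t..s} (t + c * x) :: ennreal)" for x :: real
  proof -
    have s: "s = t + c" unfolding c_def by simp
    have 1: "(t \<le> t + c * x) = (0 \<le> x)" using c by (simp add: zero_le_mult_iff)
    have 2: "(t + c * x \<le> s) = (c * x \<le> c * 1)" unfolding s by simp
    have 3: "(c * x \<le> c * 1) = (x \<le> 1)" using c by (rule mult_le_cancel_left_pos)
    have "(x \<in> {0..1}) = (t + c * x \<in> {t..s})" using 1 2 3 by auto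
    then show ?thesis by (simp add: indicator_def)
  qed
  have "line_integral \<rho> (0, 1, \<lambda>x. h (t + c * x)) = (\<integral>\<^sup>+x. G (t + c * x) * ennreal c \<partial>lborel)"
    unfolding line_integral_def G_def prod.case
    by (intro nn_integral_cong) (simp only: metric_speed_affine[OF c] ind, simp add: ac_simps)
  also have "\<dots> \<le> (\<integral>\<^sup>+y. G y \<partial>lborel)" by (rule nn_integral_affine_le[OF c])
  also have "\<dots> = line_integral \<rho> (t, s, h)" unfolding line_integral_def G_def by simp
  finally show ?thesis unfolding c_def .
qed

lemma metric_speed_const: "metric_speed (\<lambda>_. z) t = 0"
  unfolding metric_speed_def by (simp add: Limsup_const e2ennreal_neg)

lemma line_integral_const: "line_integral \<rho> (a, b, \<lambda>_. z) = 0"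
  unfolding line_integral_def by (simp add: metric_speed_const)

lemma curves_between_mono:
  "\<delta>1 \<le> \<delta>2 \<Longrightarrow> curves_between (cball x \<delta>1) (cball y \<delta>1) \<subseteq> curves_between (cball x \<delta>2) (cball y \<delta>2)"
  unfolding curves_between_def by auto

lemma d_prime_sup:
  "d_prime \<mu> p u x y = (SUP \<delta>\<in>{0<..}. ess_len \<mu> p u (curves_between (cball x \<delta>) (cball y \<delta>)))"
proof -
  define G where "G = (\<lambda>\<delta>::real. ess_len \<mu> p u (curves_between (cball x \<delta>) (cball y \<delta>)))"
  have anti: "G \<delta>2 \<le> G \<delta>1" if "\<delta>1 \<le> \<delta>2" for \<delta>1 \<delta>2
    unfolding G_def by (rule ess_len_antimono[OF curves_between_mono[OF that]])
  define S where "S = (SUP \<delta>\<in>{0<..}. G \<delta>)"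
  have "(G \<longlongrightarrow> S) (at_right 0)"
  proof (rule order_tendstoI)
    fix z assume "z < S"
    then obtain \<delta>0 where d0: "\<delta>0 > 0" "z < G \<delta>0" unfolding S_def less_SUP_iff by auto
    show "eventually (\<lambda>\<delta>. z < G \<delta>) (at_right 0)"
      unfolding eventually_at_right_field
    proof (intro exI[of _ \<delta>0] conjI allI impI)
      show "0 < \<delta>0" by (rule d0(1))
      fix \<delta> :: real assume "0 < \<delta>" "\<delta> < \<delta>0"
      then show "z < G \<delta>" using d0(2) anti[of \<delta> \<delta>0] by simp
    qed
  next
    fix z assume Sz: "S < z"
    show "eventually (\<lambda>\<delta>. G \<delta> < z) (at_right 0)"
      unfolding eventually_at_right_field
    proof (intro exI[of _ 1] conjI allI impI)
      fix \<delta> :: real assume "0 < \<delta>" "\<delta> < 1"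
      then have "G \<delta> \<le> S" unfolding S_def by (intro SUP_upper) simp
      then show "G \<delta> < z" using Sz by simp
    qed simp
  qed
  then have "Lim (at_right 0) G = S" by (intro tendsto_Lim) simp_all
  then show ?thesis unfolding d_prime_def G_def S_def .
qed

lemma d_prime_ge:
  assumes cu: "continuous_on UNIV u"
  shows "ennreal (dist (u x) (u y)) \<le> d_prime \<mu> p u x y"
proof (rule ennreal_le_epsilon)
  fix e :: real assume e: "e > 0"
  obtain \<delta>1 where d1: "\<delta>1 > 0" "\<forall>z. dist z x < \<delta>1 \<longrightarrow> dist (u z) (u x) < e / 2"
    using cu[unfolded continuous_on_iff, rule_format, of x "e / 2"] e by auto
  obtain \<delta>2 where d2: "\<delta>2 > 0" "\<forall>z. dist z y < \<delta>2 \<longrightarrow> dist (u z) (u y) < e / 2"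
    using cu[unfolded continuous_on_iff, rule_format, of y "e / 2"] e by auto
  define \<delta> where "\<delta> = min \<delta>1 \<delta>2 / 2"
  have d: "\<delta> > 0" "\<delta> < \<delta>1" "\<delta> < \<delta>2" unfolding \<delta>_def using d1 d2 by auto
  define D where "D = dist (u x) (u y)"
  have lb: "ennreal (D - e) \<le> (case c of (a, b, \<gamma>) \<Rightarrow> curve_length a b (u \<circ> \<gamma>))"
    if c: "c \<in> curves_between (cball x \<delta>) (cball y \<delta>)" for c
  proof -
    obtain h where ch: "c = (0, 1, h)" and h0: "h 0 \<in> cball x \<delta>" and h1: "h 1 \<in> cball y \<delta>"
      using c unfolding curves_between_def by auto
    have "dist (h 0) x < \<delta>1" using h0 d by (simp add: dist_commute)
    then have a0: "dist (u (h 0)) (u x) < e / 2" using d1 by blast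
    have "dist (h 1) y < \<delta>2" using h1 d by (simp add: dist_commute)
    then have a1: "dist (u (h 1)) (u y) < e / 2" using d2 by blast
    have "D \<le> dist (u x) (u (h 0)) + dist (u (h 0)) (u y)" unfolding D_def by (rule dist_triangle)
    moreover have "dist (u (h 0)) (u y) \<le> dist (u (h 0)) (u (h 1)) + dist (u (h 1)) (u y)" by (rule dist_triangle)
    ultimately have "D - e \<le> dist (u (h 0)) (u (h 1))" using a0 a1 by (simp add: dist_commute)
    then have "ennreal (D - e) \<le> psum Dist (map (u \<circ> h) [0, 1])" by (simp add: ennreal_leI)
    also have "\<dots> \<le> var_length Dist 0 1 (u \<circ> h)" by (rule psum_le_var_length) auto
    finally show ?thesis unfolding ch curve_length_var by simp
  qed
  have "ennreal (D - e) \<le> (INF c\<in>curves_between (cball x \<delta>) (cball y \<delta>). (case c of (a, b, \<gamma>) \<Rightarrow> curve_length a b (u \<circ> \<gamma>)))"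
    by (rule INF_greatest) (rule lb)
  also have "\<dots> \<le> ess_len \<mu> p u (curves_between (cball x \<delta>) (cball y \<delta>))" by (rule ess_len_ge)
  also have "\<dots> \<le> d_prime \<mu> p u x y" unfolding d_prime_sup by (rule SUP_upper) (use d in simp)
  finally have X: "ennreal (D - e) \<le> d_prime \<mu> p u x y" .
  have "ennreal D \<le> ennreal (D - e) + ennreal e"
  proof (cases "D \<ge> e")
    case True
    then show ?thesis using e by (simp add: ennreal_plus[symmetric] del: ennreal_plus)
  next
    case False
    then have "ennreal D \<le> ennreal e" by (intro ennreal_leI) simp
    then show ?thesis by (simp add: add_increasing)
  qed
  also have "\<dots> \<le> d_prime \<mu> p u x y + ennreal e" using X by (rule add_right_mono)
  finally show "ennreal (dist (u x) (u y)) \<le> d_prime \<mu> p u x y + ennreal e" unfolding D_def .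
qed

lemma d_up_le_d_prime: "d_up \<mu> p u x y \<le> d_prime \<mu> p u x y"
  unfolding d_up_def by (rule INF_lower2[of "[]"]) (simp_all add: Let_def)

lemma psum_ge_ends: "Dist (f x) (f (last (x # xs))) \<le> psum (\<lambda>a b. Dist (f a) (f b)) (x # xs)"
proof (induction xs arbitrary: x)
  case Nil
  then show ?case by simp
next
  case (Cons y ys)
  have "Dist (f x) (f (last (x # y # ys))) = Dist (f x) (f (last (y # ys)))" by simp
  also have "\<dots> \<le> Dist (f x) (f y) + Dist (f y) (f (last (y # ys)))" by (rule Dist_tri)
  also have "\<dots> \<le> Dist (f x) (f y) + psum (\<lambda>a b. Dist (f a) (f b)) (y # ys)"
    using Cons.IH by (rule add_left_mono)
  finally show ?case by simp
qed

lemma d_up_ge: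
  assumes cu: "continuous_on UNIV u"
  shows "ennreal (dist (u x) (u y)) \<le> d_up \<mu> p u x y"
  unfolding d_up_def Let_def
proof (rule INF_greatest)
  fix zs :: "'a list"
  let ?xs = "x # zs @ [y]"
  have "ennreal (dist (u x) (u y)) = Dist (u x) (u (last ?xs))" by simp
  also have "\<dots> \<le> psum (\<lambda>a b. Dist (u a) (u b)) ?xs" by (rule psum_ge_ends)
  also have "\<dots> \<le> psum (d_prime \<mu> p u) ?xs" by (rule psum_mono_d) (rule d_prime_ge[OF cu])
  also have "\<dots> = (\<Sum>i<length ?xs - 1. d_prime \<mu> p u (?xs ! i) (?xs ! Suc i))" by (rule sum_psum[symmetric])
  finally show "ennreal (dist (u x) (u y)) \<le> (\<Sum>i<length ?xs - 1. d_prime \<mu> p u (?xs ! i) (?xs ! Suc i))" .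
qed

lemma psum_const0: "psum Dist (map (\<lambda>_. z) ts) = 0"
  by (induction ts rule: induct_list012) auto

lemma var_length_const0: "var_length Dist a b (\<lambda>_. z) = 0"
  unfolding var_length_psum psum_const0 by (intro antisym SUP_least) simp_all

lemma var_length_affine_le:
  assumes "t \<le> s"
  shows "var_length Dist 0 1 (\<lambda>x. F (t + (s - t) * x)) \<le> var_length Dist t s F"
  unfolding var_length_psum[of _ 0 1]
proof (rule SUP_least)
  fix ts :: "real list" assume ts: "ts \<in> {ts. sorted ts \<and> set ts \<subseteq> {0..1}}"
  define \<phi> where "\<phi> = (\<lambda>x::real. t + (s - t) * x)"
  have mono: "\<phi> x \<le> \<phi> y" if "x \<le> y" for x y
    unfolding \<phi>_def using assms that by (simp add: mult_left_mono)
  have srt: "sorted (map \<phi> ts)" using ts mono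
    by (auto simp: sorted_map intro: sorted_wrt_mono_rel)
  have rng: "set (map \<phi> ts) \<subseteq> {t..s}"
  proof
    fix y assume "y \<in> set (map \<phi> ts)"
    then obtain x where x: "x \<in> {0..1}" "y = \<phi> x" using ts by auto
    have "0 \<le> (s - t) * x" using x assms by simp
    moreover have "(s - t) * x \<le> (s - t) * 1" using x assms by (intro mult_left_mono) auto
    ultimately show "y \<in> {t..s}" using x unfolding \<phi>_def by auto
  qed
  have "psum Dist (map (\<lambda>x. F (t + (s - t) * x)) ts) = psum Dist (map F (map \<phi> ts))"
    unfolding \<phi>_def by (simp add: comp_def)
  also have "\<dots> \<le> var_length Dist t s F" by (rule psum_le_var_length[OF srt rng])
  finally show "psum Dist (map (\<lambda>x. F (t + (s - t) * x)) ts) \<le> var_length Dist t s F" .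
qed

lemma dprime_le:
  assumes reg: "regular_curve \<mu> p u (t, s, g)"
  shows "d_prime \<mu> p u (g t) (g s) \<le> curve_length t s (u \<circ> g)"
proof -
  have lip: "lip_curve (t, s, g)"
    and rb: "\<And>\<delta>. \<delta> > 0 \<Longrightarrow> ess_len \<mu> p u (curve_ball (t, s, g) \<delta>) \<le> curve_length t s (u \<circ> g)"
    using reg unfolding regular_curve_def by auto
  from lip have ts: "t \<le> s" unfolding lip_curve_def by auto
  define T where "T = curve_length t s (u \<circ> g)"
  show ?thesis
    unfolding d_prime_sup T_def[symmetric]
  proof (rule SUP_least)
    fix \<delta> :: real assume "\<delta> \<in> {0<..}"
    then have dpos: "\<delta> > 0" by simp
    show "ess_len \<mu> p u (curves_between (cball (g t) \<delta>) (cball (g s) \<delta>)) \<le> T"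
    proof (rule ess_len_le)
      fix \<Gamma>0 assume null: "p_modulus \<mu> p \<Gamma>0 = (0::ennreal)"
      show "(INF c\<in>curves_between (cball (g t) \<delta>) (cball (g s) \<delta>) - \<Gamma>0.
              (case c of (a, b, \<gamma>) \<Rightarrow> curve_length a b (u \<circ> \<gamma>))) \<le> T"
      proof (cases "t = s")
        case True
        define c0 where "c0 = (0::real, 1::real, \<lambda>_::real. g t)"
        have "c0 \<in> curves_between (cball (g t) \<delta>) (cball (g s) \<delta>)"
          unfolding c0_def curves_between_def lip_curve_def using True dpos
          by (auto intro: lipschitz_on_constant)
        moreover have "c0 \<notin> \<Gamma>0"
        proof
          assume "c0 \<in> \<Gamma>0"
          then have "p_modulus \<mu> p \<Gamma>0 = top"
            by (rule p_modulus_zero_curve) (simp add: c0_def line_integral_const)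
          then show False using null by simp
        qed
        ultimately have "c0 \<in> curves_between (cball (g t) \<delta>) (cball (g s) \<delta>) - \<Gamma>0" by blast
        then have "(INF c\<in>curves_between (cball (g t) \<delta>) (cball (g s) \<delta>) - \<Gamma>0.
              (case c of (a, b, \<gamma>) \<Rightarrow> curve_length a b (u \<circ> \<gamma>))) \<le> (case c0 of (a, b, \<gamma>) \<Rightarrow> curve_length a b (u \<circ> \<gamma>))"
          by (rule INF_lower)
        also have "\<dots> = 0" unfolding c0_def curve_length_var by (simp add: comp_def var_length_const0)
        finally show ?thesis by simp
      next
        case False
        then have tls: "t < s" using ts by simp
        show ?thesis
        proof (rule ennreal_le_epsilon)
          fix e :: real assume Tfin: "T < top" and e: "e > 0"
          define \<Gamma>1 where "\<Gamma>1 = {(t, s, h) | h. (0, 1, \<lambda>x. h (t + (s - t) * x)) \<in> \<Gamma>0}"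
          have null1: "p_modulus \<mu> p \<Gamma>1 = 0"
          proof -
            have "p_modulus \<mu> p \<Gamma>1 \<le> p_modulus \<mu> p \<Gamma>0"
            proof (rule p_modulus_mono_adm)
              fix \<rho> :: "'a \<Rightarrow> ennreal" assume adm: "\<forall>c\<in>\<Gamma>0. 1 \<le> line_integral \<rho> c"
              show "\<forall>c\<in>\<Gamma>1. 1 \<le> line_integral \<rho> c"
              proof
                fix c assume "c \<in> \<Gamma>1"
                then obtain h where c: "c = (t, s, h)" and h: "(0, 1, \<lambda>x. h (t + (s - t) * x)) \<in> \<Gamma>0"
                  unfolding \<Gamma>1_def by blast
                have "1 \<le> line_integral \<rho> (0, 1, \<lambda>x. h (t + (s - t) * x))" using adm h by blast
                also have "\<dots> \<le> line_integral \<rho> (t, s, h)" by (rule line_integral_affine[OF tls])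
                finally show "1 \<le> line_integral \<rho> c" unfolding c .
              qed
            qed
            then show ?thesis using null by simp
          qed
          obtain tv where tv: "T = ennreal tv" "tv \<ge> 0" using Tfin by (cases T) auto
          have TE: "T < T + ennreal e" unfolding tv using e by (simp add: ennreal_plus[symmetric] del: ennreal_plus)
          obtain c where c: "c \<in> curve_ball (t, s, g) \<delta> - \<Gamma>1"
            and cl: "(case c of (a, b, \<gamma>) \<Rightarrow> curve_length a b (u \<circ> \<gamma>)) < T + ennreal e"
            using ess_len_obtain[OF rb[OF dpos] null1, of "T + ennreal e"] TE unfolding T_def
            by blast
          then obtain h where ch: "c = (t, s, h)" and liph: "lip_curve (t, s, h)"
            and sup: "(SUP x\<in>{t..s}. ereal (dist (h x) (g x))) < ereal \<delta>"
            unfolding curve_ball_def by auto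
          have pw: "dist (h x) (g x) < \<delta>" if "x \<in> {t..s}" for x
          proof -
            have "ereal (dist (h x) (g x)) \<le> (SUP x\<in>{t..s}. ereal (dist (h x) (g x)))"
              using that by (rule SUP_upper)
            then have "ereal (dist (h x) (g x)) < ereal \<delta>" using sup by (rule order.strict_trans1)
            then show ?thesis by simp
          qed
          obtain K where K: "K-lipschitz_on {t..s} h" using liph unfolding lip_curve_def by auto
          define c' where "c' = (0::real, 1::real, \<lambda>x. h (t + (s - t) * x))"
          have rng: "t + (s - t) * x \<in> {t..s}" if "x \<in> {0..1}" for x
          proof -
            have "0 \<le> (s - t) * x" using that ts by simp
            moreover have "(s - t) * x \<le> (s - t) * 1" using that ts by (intro mult_left_mono) auto
            ultimately show ?thesis by auto
          qed
          have lipc: "(K * (s - t))-lipschitz_on {0..1} (\<lambda>x. h (t + (s - t) * x))"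
          proof (rule lipschitz_onI)
            fix x y :: real assume x: "x \<in> {0..1}" and y: "y \<in> {0..1}"
            have "dist (h (t + (s - t) * x)) (h (t + (s - t) * y)) \<le> K * dist (t + (s - t) * x) (t + (s - t) * y)"
              by (rule lipschitz_onD[OF K rng[OF x] rng[OF y]])
            also have "dist (t + (s - t) * x) (t + (s - t) * y) = (s - t) * dist x y"
              using ts by (simp add: dist_real_def abs_mult right_diff_distrib[symmetric])
            finally show "dist (h (t + (s - t) * x)) (h (t + (s - t) * y)) \<le> K * (s - t) * dist x y"
              by (simp add: mult.assoc)
          next
            show "0 \<le> K * (s - t)" using lipschitz_on_nonneg[OF K] ts by simp
          qed
          have "c' \<in> curves_between (cball (g t) \<delta>) (cball (g s) \<delta>)"
          proof -
            have "dist (g t) (h t) \<le> \<delta>" using pw[of t] ts by (simp add: dist_commute)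
            moreover have "dist (g s) (h s) \<le> \<delta>" using pw[of s] ts by (simp add: dist_commute)
            ultimately show ?thesis unfolding c'_def curves_between_def lip_curve_def
              using lipc by auto
          qed
          moreover have "c' \<notin> \<Gamma>0"
          proof
            assume "c' \<in> \<Gamma>0"
            then have "(t, s, h) \<in> \<Gamma>1" unfolding \<Gamma>1_def c'_def by blast
            then show False using c ch by simp
          qed
          ultimately have c'in: "c' \<in> curves_between (cball (g t) \<delta>) (cball (g s) \<delta>) - \<Gamma>0" by blast
          have "(INF c\<in>curves_between (cball (g t) \<delta>) (cball (g s) \<delta>) - \<Gamma>0.
              (case c of (a, b, \<gamma>) \<Rightarrow> curve_length a b (u \<circ> \<gamma>))) \<le> (case c' of (a, b, \<gamma>) \<Rightarrow> curve_length a b (u \<circ> \<gamma>))"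
            using c'in by (rule INF_lower)
          also have "\<dots> = var_length Dist 0 1 (\<lambda>x. (u \<circ> h) (t + (s - t) * x))"
            unfolding c'_def curve_length_var by (simp add: comp_def)
          also have "\<dots> \<le> var_length Dist t s (u \<circ> h)" by (rule var_length_affine_le[OF ts])
          also have "\<dots> = (case c of (a, b, \<gamma>) \<Rightarrow> curve_length a b (u \<circ> \<gamma>))"
            unfolding ch curve_length_var by simp
          also have "\<dots> \<le> T + ennreal e" using cl by simp
          finally show "(INF c\<in>curves_between (cball (g t) \<delta>) (cball (g s) \<delta>) - \<Gamma>0.
              (case c of (a, b, \<gamma>) \<Rightarrow> curve_length a b (u \<circ> \<gamma>))) \<le> T + ennreal e" .
        qed
      qed
    qed
  qed
qed

lemma len_up_le:
  assumes cu: "continuous_on UNIV u" and reg: "regular_curve \<mu> p u (a, b, g)"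
  shows "len_up \<mu> p u (a, b, g) \<le> curve_length a b (u \<circ> g)"
proof -
  have key: "psum (d_up \<mu> p u) (map g ts) \<le> curve_length (hd ts) (last ts) (u \<circ> g)"
    if "sorted ts" "set ts \<subseteq> {a..b}" "ts \<noteq> []" for ts
    using that
  proof (induction ts rule: induct_list012)
    case 1
    then show ?case by simp
  next
    case (2 x)
    then show ?case by simp
  next
    case (3 x y zs)
    have xy: "x \<le> y" and srt: "sorted (y # zs)" using "3.prems"(1) by auto
    have ya: "y \<le> last (y # zs)" using srt by (cases zs) (auto simp: last_in_set)
    have ax: "a \<le> x" and yb: "y \<le> b" using "3.prems"(2) by auto
    have IH: "psum (d_up \<mu> p u) (map g (y # zs)) \<le> curve_length y (last (y # zs)) (u \<circ> g)"
    proof -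
      have sub: "set (y # zs) \<subseteq> {a..b}" using "3.prems"(2) by auto
      have "psum (d_up \<mu> p u) (map g (y # zs)) \<le> curve_length (hd (y # zs)) (last (y # zs)) (u \<circ> g)"
        by (rule "3.IH"(2)[OF srt sub]) simp
      then show ?thesis by simp
    qed
    have "d_up \<mu> p u (g x) (g y) \<le> d_prime \<mu> p u (g x) (g y)" by (rule d_up_le_d_prime)
    also have "\<dots> \<le> curve_length x y (u \<circ> g)"
      by (rule dprime_le[OF regular_restrict[OF cu reg ax xy yb]])
    finally have D: "d_up \<mu> p u (g x) (g y) \<le> curve_length x y (u \<circ> g)" .
    have "psum (d_up \<mu> p u) (map g (x # y # zs)) = d_up \<mu> p u (g x) (g y) + psum (d_up \<mu> p u) (map g (y # zs))"
      by simp
    also have "\<dots> \<le> curve_length x y (u \<circ> g) + curve_length y (last (y # zs)) (u \<circ> g)"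
      using D IH by (rule add_mono)
    also have "\<dots> \<le> curve_length x (last (y # zs)) (u \<circ> g)"
      unfolding curve_length_var by (rule var_length_superadd[OF ya xy])
    finally have R: "psum (d_up \<mu> p u) (map g (x # y # zs)) \<le> curve_length x (last (y # zs)) (u \<circ> g)" .
    have e: "hd (x # y # zs) = x" "last (x # y # zs) = last (y # zs)" by simp_all
    show ?case unfolding e by (rule R)
  qed
  show ?thesis
    unfolding len_up_def prod.case var_length_psum[of "d_up \<mu> p u"]
  proof (rule SUP_least)
    fix ts assume ts: "ts \<in> {ts. sorted ts \<and> set ts \<subseteq> {a..b}}"
    show "psum (d_up \<mu> p u) (map g ts) \<le> curve_length a b (u \<circ> g)"
    proof (cases "ts = []")
      case True
      then show ?thesis by simp
    next
      case False
      have "psum (d_up \<mu> p u) (map g ts) \<le> curve_length (hd ts) (last ts) (u \<circ> g)"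
        using ts False by (intro key) auto
      also have "\<dots> \<le> curve_length a b (u \<circ> g)"
        unfolding curve_length_var using ts False
        by (intro var_length_mono_int) (auto simp: hd_in_set last_in_set subset_iff)
      finally show ?thesis .
    qed
  qed
qed

lemma len_up_ge:
  assumes cu: "continuous_on UNIV u"
  shows "curve_length a b (u \<circ> g) \<le> len_up \<mu> p u (a, b, g)"
  unfolding len_up_def prod.case curve_length_var var_length_psum
proof (rule SUP_mono)
  fix ts assume "ts \<in> {ts. sorted ts \<and> set ts \<subseteq> {a..b}}"
  moreover have "psum Dist (map (u \<circ> g) ts) \<le> psum (d_up \<mu> p u) (map g ts)"
  proof -
    have "psum Dist (map (u \<circ> g) ts) = psum (\<lambda>x y. Dist (u x) (u y)) (map g ts)"
      by (simp add: psum_map comp_def)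
    also have "\<dots> \<le> psum (d_up \<mu> p u) (map g ts)" by (rule psum_mono_d) (rule d_up_ge[OF cu])
    finally show ?thesis .
  qed
  ultimately show "\<exists>ts'\<in>{ts. sorted ts \<and> set ts \<subseteq> {a..b}}. psum Dist (map (u \<circ> g) ts) \<le> psum (d_up \<mu> p u) (map g ts')"
    by blast
qed

theorem proposition5p7:
  fixes \<mu> :: "'a::metric_space measure" and p :: real
    and u :: "'a \<Rightarrow> 'b::complete_space"
    and a b t s :: real and g :: "real \<Rightarrow> 'a"
  assumes "mms \<mu>" and "p \<ge> 1"
    and "newtonian_loc \<mu> p u" and "continuous_on UNIV u"
    and "regular_curve \<mu> p u (a, b, g)"
    and "a \<le> t" and "t \<le> s" and "s \<le> b"
  shows "regular_curve \<mu> p u (t, s, g) \<and> len_up \<mu> p u (a, b, g) = curve_length a b (u \<circ> g)"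
proof
  show "regular_curve \<mu> p u (t, s, g)" by (rule regular_restrict[OF assms(4,5,6,7,8)])
  show "len_up \<mu> p u (a, b, g) = curve_length a b (u \<circ> g)"
    by (rule antisym[OF len_up_le[OF assms(4,5)] len_up_ge[OF assms(4)]])
qed

end
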